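(* Let $0<\alpha<\beta$ and $t\ge1$. Define $\mathcal{P}_t''$ to be the set of real polynomials $f$ of degree at most $t$ such that $f(0)=0$, $f$ is $t$-equioscillatory on $[0,\alpha]$, and $f(\beta)=1$. Then the problem \[ \min_{f\in\mathcal{P}_t''}\ \max_{\lambda\in[0,\alpha]}|f(\lambda)| \] is solved by \[ f_t^\star(\lambda)=\prod_{s=0}^{t-1}\frac{\lambda-r_{s,t}}{\beta-r_{s,t}},\qquad r_{s,t}:=\alpha\,\frac{\cos\!\big(\frac{\pi(s+1/2)}{t}\big)+\cos\!\big(\frac{\pi}{2t}\big)}{1+\cos\!\big(\frac{\pi}{2t}\big)}; \] that is, $f_t^\star\in\mathcal{P}_t''$ and $\max_{[0,\alpha]}|f_t^\star|\le\max_{[0,\alpha]}|g|$ for every $g\in\mathcal{P}_t''$.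
   Context: A polynomial $f$ is called $t$-equioscillatory on an interval $[a,b]$ if there exist points $a\le\gamma_0<\gamma_1<\dots<\gamma_{t-1}\le b$ such that $|f(\gamma_s)|=\max_{\lambda\in[a,b]}|f(\lambda)|$ for all $0\le s\le t-1$ and $f(\gamma_0)=-f(\gamma_1)=f(\gamma_2)=-f(\gamma_3)=\cdots$. *)

theory Defs
  imports "HOL-Analysis.Analysis" "HOL-Computational_Algebra.Polynomial"
begin

definition supnorm_on :: "real \<Rightarrow> real \<Rightarrow> real poly \<Rightarrow> real" where
  "supnorm_on a b f = (SUP x\<in>{a..b}. \<bar>poly f x\<bar>)"

definition equiosc :: "nat \<Rightarrow> real \<Rightarrow> real \<Rightarrow> real poly \<Rightarrow> bool" where
  "equiosc t a b f \<longleftrightarrow>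
     (\<exists>\<gamma> :: nat \<Rightarrow> real.
        (\<forall>s<t. a \<le> \<gamma> s \<and> \<gamma> s \<le> b) \<and>
        (\<forall>s. Suc s < t \<longrightarrow> \<gamma> s < \<gamma> (Suc s)) \<and>
        (\<forall>s<t. \<bar>poly f (\<gamma> s)\<bar> = supnorm_on a b f) \<and>
        (\<forall>s<t. poly f (\<gamma> s) = (-1) ^ s * poly f (\<gamma> 0)))"

definition P_t2 :: "real \<Rightarrow> real \<Rightarrow> nat \<Rightarrow> real poly set" where
  "P_t2 \<alpha> \<beta> t = {f. degree f \<le> t \<and> poly f 0 = 0 \<and> equiosc t 0 \<alpha> f \<and> poly f \<beta> = 1}"

definition r_node :: "real \<Rightarrow> nat \<Rightarrow> nat \<Rightarrow> real" where
  "r_node \<alpha> s t = \<alpha> * (cos (pi * (real s + 1/2) / real t) + cos (pi / (2 * real t)))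
                         / (1 + cos (pi / (2 * real t)))"

definition f_star :: "real \<Rightarrow> real \<Rightarrow> nat \<Rightarrow> real poly" where
  "f_star \<alpha> \<beta> t = (\<Prod>s<t. smult (1 / (\<beta> - r_node \<alpha> s t)) [:- r_node \<alpha> s t, 1:])"

end

theory Submission
  imports Defs
begin


fun cheb :: "nat \<Rightarrow> real poly" where
  "cheb 0 = 1" | "cheb (Suc 0) = [:0,1:]"
| "cheb (Suc (Suc n)) = pCons 0 (smult 2 (cheb (Suc n))) - cheb n"

lemma cheb_cos: "poly (cheb n) (cos x) = cos (real n * x)"
proof (induction n rule: cheb.induct)
  case (3 n)
  have e1: "cos (real (Suc (Suc n)) * x) = cos (real (Suc n) * x + x)"
    by (simp add: algebra_simps)
  have e2: "cos (real n * x) = cos (real (Suc n) * x - x)"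
    by (simp add: algebra_simps)
  show ?case using 3 unfolding e1 cheb.simps poly_diff poly_pCons poly_smult
    by (simp only: e2 cos_add cos_diff) (simp add: algebra_simps)
qed auto

lemma cheb_deg: "degree (cheb n) \<le> n \<and> coeff (cheb n) n = (if n=0 then 1 else 2^(n-1))"
proof (induction n rule: cheb.induct)
  case (3 n)
  have d: "degree (cheb (Suc (Suc n))) \<le> Suc (Suc n)"
    using 3 by (auto intro!: order.trans[OF degree_diff_le_max] order.trans[OF degree_pCons_le]
        order.trans[OF degree_smult_le])
  have "coeff (cheb n) (Suc (Suc n)) = 0" using 3 by (intro coeff_eq_0) auto
  then show ?case using 3 d by auto
qed auto



definition th :: "nat \<Rightarrow> nat \<Rightarrow> real" where
  "th t s = pi * (real s + 1/2) / real t"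

definition Q :: "nat \<Rightarrow> real poly" where
  "Q t = (\<Prod>s<t. [:- cos (th t s), 1:])"

lemma th_range: "s < t \<Longrightarrow> 0 \<le> th t s \<and> th t s \<le> pi"
proof -
  assume "s < t"
  then have "real s + 1/2 \<le> real t" by linarith
  then have "pi * (real s + 1/2) \<le> pi * real t" by simp
  then show ?thesis using \<open>s<t\<close> unfolding th_def by (auto simp: field_simps)
qed

lemma cheb_root: "s < t \<Longrightarrow> poly (cheb t) (cos (th t s)) = 0"
proof -
  assume "s < t"
  then have "real t * th t s = real s * pi + pi/2" unfolding th_def by (simp add: field_simps)
  then show ?thesis by (simp add: cheb_cos cos_add)
qed

lemma cheb_Q: assumes "1 \<le> t" shows "cheb t = smult (2^(t-1)) (Q t)"
proof (rule ccontr)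
  define p where "p = cheb t - smult (2^(t-1)) (Q t)"
  assume "cheb t \<noteq> smult (2^(t-1)) (Q t)"
  then have p0: "p \<noteq> 0" unfolding p_def by simp
  have dQ: "degree (Q t) = t" unfolding Q_def by (subst degree_prod_sum_eq) auto
  have lQ: "lead_coeff (Q t) = 1" unfolding Q_def by (simp add: lead_coeff_prod)
  have "degree p \<le> t - 1"
  proof (rule degree_le, intro allI impI)
    fix i assume "t - 1 < i"
    show "coeff p i = 0"
    proof (cases "i = t")
      case True
      then show ?thesis using cheb_deg[of t] assms lQ dQ unfolding p_def by simp
    next
      case False
      then have "i > t" using \<open>t - 1 < i\<close> by simp
      then show ?thesis using cheb_deg[of t] dQ unfolding p_def
        by (simp add: coeff_eq_0)
    qed
  qed
  moreover have "card {x. poly p x = 0} \<le> degree p" by (rule card_poly_roots_bound[OF p0])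
  moreover have "card ((\<lambda>s. cos (th t s)) ` {..<t}) \<le> card {x. poly p x = 0}"
  proof (rule card_mono)
    show "finite {x. poly p x = 0}" using p0 by (rule poly_roots_finite)
    show "(\<lambda>s. cos (th t s)) ` {..<t} \<subseteq> {x. poly p x = 0}"
      unfolding p_def Q_def by (auto simp: cheb_root poly_prod)
  qed
  moreover have "card ((\<lambda>s. cos (th t s)) ` {..<t}) = t"
  proof (subst card_image)
    show "inj_on (\<lambda>s. cos (th t s)) {..<t}"
    proof (rule inj_onI)
      fix x y assume "x \<in> {..<t}" "y \<in> {..<t}" "cos (th t x) = cos (th t y)"
      then have "th t x = th t y" using th_range[of x t] th_range[of y t] cos_inj_pi by simp
      then show "x = y" using assms unfolding th_def by (auto simp: field_simps)
    qed
  qed auto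
  ultimately show False using assms by linarith
qed



lemma gamma_mono: assumes "\<forall>s. Suc s < t \<longrightarrow> (\<gamma>::nat\<Rightarrow>real) s < \<gamma> (Suc s)"
  shows "i \<le> j \<Longrightarrow> j < t \<Longrightarrow> \<gamma> i \<le> \<gamma> j"
proof (induction j)
  case 0 then show ?case by simp
next
  case (Suc j)
  show ?case
  proof (cases "i = Suc j")
    case False
    then have "i \<le> j" using Suc by simp
    then show ?thesis using Suc assms by (meson Suc_lessD less_le_not_le linorder_le_less_linear order.trans)
  qed simp
qed

lemma sup_bdd: "bdd_above ((\<lambda>x. \<bar>poly (g::real poly) x\<bar>) ` {a..b})"
  by (intro bounded_imp_bdd_above compact_imp_bounded compact_continuous_image continuous_intros) auto

lemma sup_upper: "x \<in> {a..b} \<Longrightarrow> \<bar>poly g x\<bar> \<le> supnorm_on a b g"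
  unfolding supnorm_on_def by (rule cSUP_upper[OF _ sup_bdd])

lemma min_gen:
  fixes f g :: "real poly"
  assumes "0<\<alpha>" "\<alpha><\<beta>" "1\<le>t" "degree f \<le> t" "degree g \<le> t" "poly f 0 = 0" "poly g 0 = 0"
    "poly f \<beta> = 1" "poly g \<beta> = 1" "equiosc t 0 \<alpha> f"
  shows "supnorm_on 0 \<alpha> f \<le> supnorm_on 0 \<alpha> g"
proof (rule ccontr)
  define M where "M = supnorm_on 0 \<alpha> f"
  define N where "N = supnorm_on 0 \<alpha> g"
  assume "\<not> supnorm_on 0 \<alpha> f \<le> supnorm_on 0 \<alpha> g"
  then have NM: "N < M" unfolding M_def N_def by simp
  obtain \<gamma> where g1: "\<forall>s<t. 0 \<le> \<gamma> s \<and> \<gamma> s \<le> \<alpha>"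
    and g2: "\<forall>s. Suc s < t \<longrightarrow> \<gamma> s < \<gamma> (Suc s)"
    and g3: "\<forall>s<t. \<bar>poly f (\<gamma> s)\<bar> = M"
    and g4: "\<forall>s<t. poly f (\<gamma> s) = (-1) ^ s * poly f (\<gamma> 0)"
    using assms(10) unfolding equiosc_def M_def by blast
  have gb: "\<And>x. x \<in> {0..\<alpha>} \<Longrightarrow> \<bar>poly g x\<bar> \<le> N" unfolding N_def by (rule sup_upper)
  have N0: "0 \<le> N" using gb[of 0] assms(1) by simp
  define \<sigma> where "\<sigma> = poly f (\<gamma> 0)"
  have t0: "0 < t" using assms(3) by simp
  have sM: "\<bar>\<sigma>\<bar> = M" using g3 t0 unfolding \<sigma>_def by simp
  have Mpos: "0 < M" using NM N0 by simp
  have gam0: "0 < \<gamma> 0"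
  proof -
    have "\<gamma> 0 \<noteq> 0" using sM Mpos assms(6) unfolding \<sigma>_def by auto
    then show ?thesis using g1 t0 by force
  qed
  define h where "h = f - g"
  have key: "0 < \<sigma> * (-1)^s * poly h (\<gamma> s)" if "s < t" for s
  proof -
    have e: "poly h (\<gamma> s) = (-1)^s * \<sigma> - poly g (\<gamma> s)"
      using g4[rule_format, OF that] unfolding h_def \<sigma>_def by simp
    have "\<bar>\<sigma> * (-1)^s * poly g (\<gamma> s)\<bar> \<le> M * N"
    proof -
      have "\<bar>\<sigma> * (-1)^s * poly g (\<gamma> s)\<bar> = \<bar>\<sigma>\<bar> * \<bar>poly g (\<gamma> s)\<bar>" by (simp add: abs_mult)
      also have "\<dots> \<le> M * N" using sM gb[of "\<gamma> s"] g1 that Mpos by (simp add: mult_left_mono)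
      finally show ?thesis .
    qed
    moreover have "\<sigma> * (-1)^s * poly h (\<gamma> s) = \<sigma>*\<sigma> - \<sigma> * (-1)^s * poly g (\<gamma> s)"
      unfolding e by (simp add: right_diff_distrib mult.assoc)
    moreover have "\<sigma>*\<sigma> = M * M" using sM by (metis abs_mult_self_eq)
    moreover have "M * N < M * M" using NM Mpos by simp
    ultimately show ?thesis by linarith
  qed
  have sc: "poly h (\<gamma> s) * poly h (\<gamma> (Suc s)) < 0" if "Suc s < t" for s
  proof -
    define u where "u = \<sigma> * (-1)^s * poly h (\<gamma> s)"
    define v where "v = \<sigma> * (-1)^(Suc s) * poly h (\<gamma> (Suc s))"
    have u0: "0 < u" unfolding u_def using key[of s] that by simp
    have "0 < v" unfolding v_def using key[of "Suc s"] that by blast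
    then have uv: "0 < u * v" using u0 by simp
    have "u * v = - (\<sigma>*\<sigma>*(poly h (\<gamma> s) * poly h (\<gamma> (Suc s))))"
      unfolding u_def v_def by (simp add: mult.assoc mult.left_commute[of "(-1)^s"])
    moreover have "0 < \<sigma>*\<sigma>" using sM Mpos by (simp add: zero_less_mult_iff) (metis abs_of_nonneg not_less zero_less_abs_iff)
    ultimately show ?thesis using uv by (metis mult_less_0_iff neg_0_less_iff_less not_less_iff_gr_or_eq)
  qed
  have "\<forall>s. \<exists>z. Suc s < t \<longrightarrow> \<gamma> s < z \<and> z < \<gamma> (Suc s) \<and> poly h z = 0"
    using sc g2 poly_IVT by blast
  then obtain z where z: "\<And>s. Suc s < t \<Longrightarrow> \<gamma> s < z s \<and> z s < \<gamma> (Suc s) \<and> poly h (z s) = 0"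
    by metis
  have zpos: "\<gamma> 0 < z s" "z s < \<beta>" if "s < t - 1" for s
  proof -
    have "\<gamma> 0 \<le> \<gamma> s" using gamma_mono[OF g2, of 0 s] that by simp
    have st: "Suc s < t" using that by simp
    then show "\<gamma> 0 < z s" using z[OF st] \<open>\<gamma> 0 \<le> \<gamma> s\<close> by simp
    have "\<gamma> (Suc s) \<le> \<alpha>" using g1 that by simp
    then show "z s < \<beta>" using z[OF st] assms(2) by simp
  qed
  have zmono: "z i < z j" if "i < j" "j < t - 1" for i j
  proof -
    have "\<gamma> (Suc i) \<le> \<gamma> j" using gamma_mono[OF g2, of "Suc i" j] that by simp
    moreover have "Suc i < t" "Suc j < t" using that by auto
    ultimately show ?thesis using z[of i] z[of j] by fastforce
  qed
  have injz: "inj_on z {..<t-1}"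
  proof (rule inj_onI)
    fix i j assume "i \<in> {..<t-1}" "j \<in> {..<t-1}" "z i = z j"
    then show "i = j" using zmono[of i j] zmono[of j i] by (metis lessThan_iff linorder_neqE_nat order_less_irrefl)
  qed
  define S where "S = insert 0 (insert \<beta> (z ` {..<t-1}))"
  have "0 \<notin> z ` {..<t-1}" using zpos gam0 by fastforce
  moreover have "\<beta> \<notin> z ` {..<t-1}" using zpos by fastforce
  moreover have "(0::real) \<noteq> \<beta>" using assms by simp
  ultimately have cS: "card S = t + 1" unfolding S_def using card_image[OF injz] assms(3) by simp
  have h0: "h \<noteq> 0" using key[of 0] t0 by auto
  have zr: "poly h (z s) = 0" if "s < t-1" for s
  proof -
    have "Suc s < t" using that by simp
    then show ?thesis using z by blast
  qed
  have "S \<subseteq> {x. poly h x = 0}" unfolding S_def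
    using assms(6-9) zr by (auto simp: h_def)
  then have "card S \<le> card {x. poly h x = 0}" using poly_roots_finite[OF h0] by (rule card_mono[rotated])
  also have "\<dots> \<le> degree h" by (rule card_poly_roots_bound[OF h0])
  also have "\<dots> \<le> t" unfolding h_def using assms(4,5) by (meson degree_diff_le le_trans)
  finally show False using cS by simp
qed


lemma c_nonneg: assumes "1 \<le> t" shows "0 \<le> cos (pi / (2 * real t))"
proof (rule cos_ge_zero)
  have "pi / (2 * real t) \<le> pi / 2" using assms by (intro divide_left_mono) auto
  then show "pi / (2 * real t) \<le> pi / 2" .
  show "- (pi / 2) \<le> pi / (2 * real t)" using assms by (smt (verit) divide_nonneg_nonneg pi_ge_zero of_nat_0_le_iff)
qed

lemma r_node_eq: assumes "1 \<le> t"
  shows "r_node \<alpha> s t = \<alpha> / (1 + cos (pi / (2 * real t))) * (cos (th t s) + cos (pi / (2 * real t)))"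
  unfolding r_node_def th_def by simp

lemma cheb_bound: "-1 \<le> y \<Longrightarrow> y \<le> 1 \<Longrightarrow> \<bar>poly (cheb t) y\<bar> \<le> 1"
  using cheb_cos[of t "arccos y"] by simp

lemma fstar_poly:
  fixes \<alpha> \<beta> :: real
  assumes "0 < \<alpha>" "1 \<le> t"
  defines "c \<equiv> cos (pi / (2 * real t))"
  defines "a \<equiv> \<alpha> / (1 + c)"
  defines "K \<equiv> (\<Prod>s<t. 1 / (\<beta> - r_node \<alpha> s t)) * a^t / 2^(t-1)"
  shows "poly (f_star \<alpha> \<beta> t) x = K * poly (cheb t) (x / a - c)"
proof -
  have c0: "0 \<le> c" unfolding c_def using c_nonneg[OF assms(2)] .
  have a0: "0 < a" unfolding a_def using c0 assms(1) by simp
  define y where "y = x / a - c"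
  have "poly (f_star \<alpha> \<beta> t) x = (\<Prod>s<t. 1 / (\<beta> - r_node \<alpha> s t) * (x - r_node \<alpha> s t))"
    unfolding f_star_def by (simp add: poly_prod diff_divide_distrib)
  also have "\<dots> = (\<Prod>s<t. 1 / (\<beta> - r_node \<alpha> s t)) * (\<Prod>s<t. (x - r_node \<alpha> s t))"
    by (rule prod.distrib)
  also have "(\<Prod>s<t. (x - r_node \<alpha> s t)) = (\<Prod>s<t. a * (y - cos (th t s)))"
  proof (rule prod.cong)
    fix s assume "s \<in> {..<t}"
    have "x = a * (y + c)" unfolding y_def using a0 by simp
    then show "x - r_node \<alpha> s t = a * (y - cos (th t s))"
      unfolding r_node_eq[OF assms(2)] a_def[symmetric] c_def[symmetric] by (simp add: algebra_simps)
  qed simp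
  also have "\<dots> = a^t * poly (Q t) y"
    unfolding Q_def poly_prod by (simp add: prod.distrib)
  also have "poly (Q t) y = poly (cheb t) y / 2^(t-1)"
    using cheb_Q[OF assms(2)] by simp
  finally show ?thesis unfolding K_def y_def by simp
qed



theorem lemma4:
  fixes \<alpha> \<beta> :: real and t :: nat
  assumes "0 < \<alpha>" and "\<alpha> < \<beta>" and "1 \<le> t"
  shows "f_star \<alpha> \<beta> t \<in> P_t2 \<alpha> \<beta> t \<and>
         (\<forall>g \<in> P_t2 \<alpha> \<beta> t. supnorm_on 0 \<alpha> (f_star \<alpha> \<beta> t) \<le> supnorm_on 0 \<alpha> g)"
proof -
  define c where "c = cos (pi / (2 * real t))"
  define a where "a = \<alpha> / (1 + c)"
  define K where "K = (\<Prod>s<t. 1 / (\<beta> - r_node \<alpha> s t)) * a^t / 2^(t-1)"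
  define f where "f = f_star \<alpha> \<beta> t"
  have c0: "0 \<le> c" unfolding c_def using c_nonneg[OF assms(3)] .
  have c1: "c \<le> 1" unfolding c_def by simp
  have a0: "0 < a" unfolding a_def using c0 assms(1) by simp
  have aa: "\<alpha> = a * (1 + c)" unfolding a_def using c0 by simp
  have fp: "poly f x = K * poly (cheb t) (x / a - c)" for x
    unfolding f_def K_def a_def c_def by (rule fstar_poly[OF assms(1,3)])
  have rle: "r_node \<alpha> s t \<le> \<alpha>" for s
  proof -
    have "r_node \<alpha> s t = a * (cos (th t s) + c)"
      unfolding r_node_eq[OF assms(3)] a_def c_def ..
    also have "\<dots> \<le> a * (1 + c)" using a0 by (intro mult_left_mono) auto
    finally show ?thesis using aa by simp
  qed
  have deg: "degree f \<le> t"
  proof -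
    have "degree f \<le> (\<Sum>s<t. degree (smult (1 / (\<beta> - r_node \<alpha> s t)) [:- r_node \<alpha> s t, 1:]))"
      unfolding f_def f_star_def by (rule order.trans[OF degree_prod_sum_le]) (simp_all only: o_def finite_lessThan order_refl)
    also have "\<dots> \<le> (\<Sum>s<t. 1)"
      by (intro sum_mono) (auto intro: order.trans[OF degree_smult_le])
    finally show ?thesis by simp
  qed
  have f0: "poly f 0 = 0"
  proof -
    have "pi * (real (t - 1) + 1 / 2) / real t = pi - pi / (2 * real t)"
      using assms(3) by (simp add: of_nat_diff field_simps)
    then have "r_node \<alpha> (t-1) t = 0" unfolding r_node_def by simp
    then show ?thesis unfolding f_def f_star_def poly_prod using assms(3)
      by (subst prod_zero_iff) (auto intro!: bexI[of _ "t-1"])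
  qed
  have fb: "poly f \<beta> = 1"
    unfolding f_def f_star_def poly_prod
  proof (intro prod.neutral ballI)
    fix s have "\<beta> - r_node \<alpha> s t \<noteq> 0" using rle[of s] assms(2) by simp
    then show "poly (smult (1 / (\<beta> - r_node \<alpha> s t)) [:- r_node \<alpha> s t, 1:]) \<beta> = 1"
      by (simp add: diff_divide_distrib[symmetric])
  qed
  have fbound: "\<bar>poly f x\<bar> \<le> \<bar>K\<bar>" if "x \<in> {0..\<alpha>}" for x
  proof -
    have "0 \<le> x / a" "x / a \<le> 1 + c" using that a0 aa by (auto simp: field_simps)
    then have "\<bar>poly (cheb t) (x / a - c)\<bar> \<le> 1" using c0 c1 by (intro cheb_bound) auto
    then show ?thesis unfolding fp abs_mult by (simp add: mult_left_le)
  qed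
  define \<gamma> where "\<gamma> s = a * (cos (real (t - 1 - s) * pi / real t) + c)" for s
  have ang: "0 \<le> real (t - 1 - s) * pi / real t \<and> real (t - 1 - s) * pi / real t \<le> pi - pi / (2 * real t)" for s
  proof -
    have "real (t - 1 - s) \<le> real t - 1" using assms(3) by (simp add: of_nat_diff)
    then have "real (t - 1 - s) * pi \<le> (real t - 1) * pi" by (simp add: mult_right_mono)
    also have "\<dots> \<le> pi * real t - pi / 2" by (simp add: algebra_simps)
    finally have "real (t - 1 - s) * pi / real t \<le> (pi * real t - pi / 2) / real t"
      using assms(3) by (simp add: divide_right_mono)
    also have "\<dots> = pi - pi / (2 * real t)" using assms(3) by (simp add: field_simps)
    finally show ?thesis by simp
  qed
  have ppos: "0 \<le> pi / (2 * real t)" by simp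
  have grange: "0 \<le> \<gamma> s \<and> \<gamma> s \<le> \<alpha>" for s
  proof -
    have "cos (pi - pi / (2 * real t)) \<le> cos (real (t - 1 - s) * pi / real t)"
      using ang[of s] ppos by (intro cos_monotone_0_pi_le) linarith+
    then have "- c \<le> cos (real (t - 1 - s) * pi / real t)" unfolding c_def by simp
    then show ?thesis unfolding \<gamma>_def using a0 aa by (auto intro: mult_left_mono)
  qed
  have gmono: "\<gamma> s < \<gamma> (Suc s)" if "Suc s < t" for s
  proof -
    have e: "real (t - 1 - s) = real (t - 1 - Suc s) + 1" using that by (simp add: of_nat_diff)
    have "real (t - 1 - Suc s) * pi / real t < real (t - 1 - s) * pi / real t"
      unfolding e using that by (simp add: divide_strict_right_mono algebra_simps)
    moreover have "0 \<le> real (t - 1 - Suc s) * pi / real t" using ang[of "Suc s"] by blast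
    moreover have "real (t - 1 - s) * pi / real t \<le> pi" using ang[of s] ppos by linarith
    ultimately have "cos (real (t - 1 - s) * pi / real t) < cos (real (t - 1 - Suc s) * pi / real t)"
      by (intro cos_monotone_0_pi)
    then show ?thesis unfolding \<gamma>_def using a0 by (intro mult_strict_left_mono add_strict_right_mono)
  qed
  have gval: "poly f (\<gamma> s) = K * (-1)^(t - 1 - s)" for s
  proof -
    have "\<gamma> s / a - c = cos (real (t - 1 - s) * pi / real t)" unfolding \<gamma>_def using a0 by simp
    moreover have "real t * (real (t - 1 - s) * pi / real t) = real (t - 1 - s) * pi"
      using assms(3) by simp
    ultimately show ?thesis unfolding fp by (simp add: cheb_cos)
  qed
  have sup: "supnorm_on 0 \<alpha> f = \<bar>K\<bar>"
  proof (rule antisym)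
    show "supnorm_on 0 \<alpha> f \<le> \<bar>K\<bar>" unfolding supnorm_on_def
      using assms(1) by (intro cSUP_least fbound) auto
    have "\<bar>K\<bar> = \<bar>poly f (\<gamma> 0)\<bar>" unfolding gval by (simp add: abs_mult)
    also have "\<dots> \<le> supnorm_on 0 \<alpha> f" using grange[of 0] by (intro sup_upper) auto
    finally show "\<bar>K\<bar> \<le> supnorm_on 0 \<alpha> f" .
  qed
  have alt: "poly f (\<gamma> s) = (-1) ^ s * poly f (\<gamma> 0)" if "s < t" for s
  proof -
    have "(-1::real)^(t - 1) = (-1)^(t - 1 - s) * (-1)^s"
      using that by (simp add: power_add[symmetric])
    then show ?thesis unfolding gval by simp
  qed
  have eq: "equiosc t 0 \<alpha> f"
    unfolding equiosc_def
  proof (intro exI[of _ \<gamma>] conjI allI impI)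
    fix s assume "s < t"
    show "0 \<le> \<gamma> s" "\<gamma> s \<le> \<alpha>" using grange by auto
    show "\<bar>poly f (\<gamma> s)\<bar> = supnorm_on 0 \<alpha> f" unfolding sup gval by (simp add: abs_mult)
    show "poly f (\<gamma> s) = (- 1) ^ s * poly f (\<gamma> 0)" using alt[OF \<open>s < t\<close>] .
  next
    fix s assume "Suc s < t" then show "\<gamma> s < \<gamma> (Suc s)" by (rule gmono)
  qed
  have mem: "f \<in> P_t2 \<alpha> \<beta> t" unfolding P_t2_def using deg f0 eq fb by simp
  show ?thesis unfolding f_def[symmetric]
  proof (intro conjI ballI mem)
    fix g assume "g \<in> P_t2 \<alpha> \<beta> t"
    then show "supnorm_on 0 \<alpha> f \<le> supnorm_on 0 \<alpha> g" unfolding P_t2_def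
      using min_gen[OF assms, of f g] deg f0 fb eq by auto
  qed
qed


end
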